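(* A function $\phi:\mathbb{Z}\to\mathbb{H}$ is an extreme point of the convex set $\mathcal{P}^{\mathbb{H}}_*(\mathbb{Z})$ if and only if $\phi$ is a group homomorphism from $(\mathbb{Z},+)$ to $\mathbb{S}$, i.e. $\phi(n)=s^n$ for some $s\in\mathbb{S}$.
   Context: $\mathbb{H}$ is the real quaternion algebra and $\mathbb{S}=\{q\in\mathbb{H}:|q|=1\}$ is the multiplicative group of unit quaternions. For an abelian group $G$ (with the involution $g^*=-g$), a function $\phi:G\to\mathbb{H}$ is positive definite if for all $k$, $g_1,\dots,g_k\in G$ and $q_1,\dots,q_k\in\mathbb{H}$, $\sum_{i,j=1}^k\overline{q_i}\,\phi(g_j-g_i)\,q_j$ is a nonnegative real number. $\mathcal{P}^{\mathbb{H}}_*(G)$ denotes the convex set of positive definite $\phi:G\to\mathbb{H}$ with $\phi(0)=1$. *)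

theory Defs
  imports "HOL-Analysis.Analysis"
begin

datatype quat = Quat (qre: real) (qi: real) (qj: real) (qk: real)

lemma quat_eqI: "qre x = qre y \<Longrightarrow> qi x = qi y \<Longrightarrow> qj x = qj y \<Longrightarrow> qk x = qk y \<Longrightarrow> x = y"
  by (cases x; cases y) simp

instantiation quat :: ab_group_add
begin
definition "0 = Quat 0 0 0 0"
definition "x + y = Quat (qre x + qre y) (qi x + qi y) (qj x + qj y) (qk x + qk y)"
definition "- x = Quat (- qre x) (- qi x) (- qj x) (- qk x)"
definition "x - y = Quat (qre x - qre y) (qi x - qi y) (qj x - qj y) (qk x - qk y)"
instance
  by standard (auto intro!: quat_eqI simp: zero_quat_def plus_quat_def uminus_quat_def minus_quat_def)
end

instantiation quat :: real_vector
begin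
definition "scaleR r x = Quat (r * qre x) (r * qi x) (r * qj x) (r * qk x)"
instance
  by standard (auto intro!: quat_eqI simp: scaleR_quat_def plus_quat_def algebra_simps)
end

text \<open>Hamilton product: i^2 = j^2 = k^2 = ijk = -1.\<close>
instantiation quat :: ring_1
begin
definition "1 = Quat 1 0 0 0"
definition "x * y = Quat
   (qre x * qre y - qi x * qi y - qj x * qj y - qk x * qk y)
   (qre x * qi y + qi x * qre y + qj x * qk y - qk x * qj y)
   (qre x * qj y - qi x * qk y + qj x * qre y + qk x * qi y)
   (qre x * qk y + qi x * qj y - qj x * qi y + qk x * qre y)"
instance
  by standard (auto intro!: quat_eqI simp: one_quat_def times_quat_def plus_quat_def
      zero_quat_def algebra_simps)
end

definition qcnj :: "quat \<Rightarrow> quat" where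
  "qcnj x = Quat (qre x) (- qi x) (- qj x) (- qk x)"

definition qnorm :: "quat \<Rightarrow> real" where
  "qnorm x = sqrt ((qre x)\<^sup>2 + (qi x)\<^sup>2 + (qj x)\<^sup>2 + (qk x)\<^sup>2)"

definition quat_of_real :: "real \<Rightarrow> quat" where
  "quat_of_real r = Quat r 0 0 0"

definition unit_quats :: "quat set" where
  "unit_quats = {q. qnorm q = 1}"

definition pos_def_Z :: "(int \<Rightarrow> quat) \<Rightarrow> bool" where
  "pos_def_Z \<phi> \<longleftrightarrow>
     (\<forall>(k::nat) (g::nat \<Rightarrow> int) (q::nat \<Rightarrow> quat).
        \<exists>r::real. r \<ge> 0 \<and>
          (\<Sum>i\<in>{1..k}. \<Sum>j\<in>{1..k}. qcnj (q i) * \<phi> (g j - g i) * q j) = quat_of_real r)"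

definition PH_Z :: "(int \<Rightarrow> quat) set" where
  "PH_Z = {\<phi>. pos_def_Z \<phi> \<and> \<phi> 0 = 1}"

text \<open>Extreme point of a set of functions into a real vector space (pointwise linear
  structure); this is the library notion \<open>extreme_point_of\<close> (not in an open segment between
  two points of the set) written out for the function space.\<close>
definition extreme_point_fun :: "('a \<Rightarrow> 'b::real_vector) \<Rightarrow> ('a \<Rightarrow> 'b) set \<Rightarrow> bool" where
  "extreme_point_fun x S \<longleftrightarrow>
     x \<in> S \<and> (\<forall>a\<in>S. \<forall>b\<in>S. a \<noteq> b \<longrightarrow>
        \<not> (\<exists>u::real. 0 < u \<and> u < 1 \<and> x = (\<lambda>n. (1 - u) *\<^sub>R a n + u *\<^sub>R b n)))"

definition hom_Z_S :: "(int \<Rightarrow> quat) \<Rightarrow> bool" where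
  "hom_Z_S \<phi> \<longleftrightarrow> (\<forall>n. \<phi> n \<in> unit_quats) \<and> (\<forall>m n. \<phi> (m + n) = \<phi> m * \<phi> n)"

end

theory Submission
  imports Defs
begin

lemma quat_eq_iff: "x = y \<longleftrightarrow> qre x = qre y \<and> qi x = qi y \<and> qj x = qj y \<and> qk x = qk y"
  by (auto intro: quat_eqI)

lemma quat_comps [simp]:
  "qre 0 = 0" "qi 0 = 0" "qj 0 = 0" "qk 0 = 0"
  "qre 1 = 1" "qi 1 = 0" "qj 1 = 0" "qk 1 = 0"
  "qre (x + y) = qre x + qre y" "qi (x + y) = qi x + qi y" "qj (x + y) = qj x + qj y" "qk (x + y) = qk x + qk y"
  "qre (x - y) = qre x - qre y" "qi (x - y) = qi x - qi y" "qj (x - y) = qj x - qj y" "qk (x - y) = qk x - qk y"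
  "qre (- x) = - qre x" "qi (- x) = - qi x" "qj (- x) = - qj x" "qk (- x) = - qk x"
  "qre (r *\<^sub>R x) = r * qre x" "qi (r *\<^sub>R x) = r * qi x" "qj (r *\<^sub>R x) = r * qj x" "qk (r *\<^sub>R x) = r * qk x"
  "qre (x * y) = qre x * qre y - qi x * qi y - qj x * qj y - qk x * qk y"
  "qi (x * y) = qre x * qi y + qi x * qre y + qj x * qk y - qk x * qj y"
  "qj (x * y) = qre x * qj y - qi x * qk y + qj x * qre y + qk x * qi y"
  "qk (x * y) = qre x * qk y + qi x * qj y - qj x * qi y + qk x * qre y"
  "qre (qcnj x) = qre x" "qi (qcnj x) = - qi x" "qj (qcnj x) = - qj x" "qk (qcnj x) = - qk x"
  "qre (quat_of_real r) = r" "qi (quat_of_real r) = 0" "qj (quat_of_real r) = 0" "qk (quat_of_real r) = 0"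
  by (simp_all add: zero_quat_def one_quat_def plus_quat_def minus_quat_def uminus_quat_def
      scaleR_quat_def times_quat_def qcnj_def quat_of_real_def)

lemma quat_of_nat_comps: "qre (of_nat n :: quat) = of_nat n" "qi (of_nat n :: quat) = 0"
  "qj (of_nat n :: quat) = 0" "qk (of_nat n :: quat) = 0"
  by (induction n) simp_all

lemma quat_numeral_comps [simp]: "qre (numeral w :: quat) = numeral w" "qi (numeral w :: quat) = 0"
  "qj (numeral w :: quat) = 0" "qk (numeral w :: quat) = 0"
  using quat_of_nat_comps[of "numeral w"] by simp_all

lemma qcnj_mult: "qcnj (x * y) = qcnj y * qcnj x"
  by (simp add: quat_eq_iff algebra_simps)
lemma qcnj_add: "qcnj (x + y) = qcnj x + qcnj y"
  by (simp add: quat_eq_iff)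
lemma qcnj_sum: "qcnj (sum f A) = sum (\<lambda>a. qcnj (f a)) A"
  by (induction A rule: infinite_finite_induct) (auto simp: qcnj_add quat_eq_iff)
lemma sum_comps:
  "qre (sum f A) = (\<Sum>a\<in>A. qre (f a))" "qi (sum f A) = (\<Sum>a\<in>A. qi (f a))"
  "qj (sum f A) = (\<Sum>a\<in>A. qj (f a))" "qk (sum f A) = (\<Sum>a\<in>A. qk (f a))"
  by (induction A rule: infinite_finite_induct) auto

lemma pd_gen:
  assumes "pos_def_Z \<psi>" "finite I"
  shows "\<exists>r\<ge>0. (\<Sum>i\<in>I. \<Sum>j\<in>I. qcnj (q i) * \<psi> (g j - g i) * q j) = quat_of_real r"
proof -
  obtain h where h: "bij_betw h {1..card I} I" using ex_bij_betw_nat_finite_1[OF assms(2)] by blast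
  obtain r where r: "r \<ge> 0" "(\<Sum>i\<in>{1..card I}. \<Sum>j\<in>{1..card I}. qcnj (q (h i)) * \<psi> (g (h j) - g (h i)) * q (h j)) = quat_of_real r"
    using assms(1) unfolding pos_def_Z_def by (elim allE[of _ "card I"] allE[of _ "g o h"] allE[of _ "q o h"]) auto
  have "(\<Sum>i\<in>I. \<Sum>j\<in>I. qcnj (q i) * \<psi> (g j - g i) * q j) =
     (\<Sum>i\<in>{1..card I}. \<Sum>j\<in>{1..card I}. qcnj (q (h i)) * \<psi> (g (h j) - g (h i)) * q (h j))"
    by (simp add: sum.reindex_bij_betw[OF h, symmetric])
  with r show ?thesis by auto
qed

lemma pd2:
  assumes "pos_def_Z \<psi>"
  shows "\<exists>r\<ge>0. qcnj a * \<psi> 0 * a + qcnj a * \<psi> n * b + qcnj b * \<psi> (-n) * a + qcnj b * \<psi> 0 * b = quat_of_real r"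
proof -
  from pd_gen[OF assms, of UNIV "\<lambda>x. if x then b else a" "\<lambda>x. if x then n else 0"]
  obtain r where "r \<ge> 0" "(\<Sum>i\<in>(UNIV::bool set). \<Sum>j\<in>UNIV. qcnj (if i then b else a) * \<psi> ((if j then n else 0) - (if i then n else 0)) * (if j then b else a)) = quat_of_real r"
    by auto
  then show ?thesis by (intro exI[of _ r]) (simp add: UNIV_bool algebra_simps)
qed

lemma pd0:
  assumes "pos_def_Z \<psi>"
  shows "\<exists>t\<ge>0. \<psi> 0 = quat_of_real t"
proof -
  from pd2[OF assms, of 1 0 0] obtain r where "r \<ge> 0" "qcnj 1 * \<psi> 0 * 1 + qcnj 1 * \<psi> 0 * 0 + qcnj 0 * \<psi> (-0) * 1 + qcnj 0 * \<psi> 0 * 0 = quat_of_real r" by blast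
  then show ?thesis by (intro exI[of _ r]) (simp add: quat_eq_iff)
qed

lemma herm:
  assumes "pos_def_Z \<psi>"
  shows "\<psi> (-n) = qcnj (\<psi> n)"
proof -
  obtain t where t: "\<psi> 0 = quat_of_real t" using pd0[OF assms] by auto
  from pd2[OF assms, of 1 n 1] obtain r1 where
    r1: "qcnj 1 * \<psi> 0 * 1 + qcnj 1 * \<psi> n * 1 + qcnj 1 * \<psi> (-n) * 1 + qcnj 1 * \<psi> 0 * 1 = quat_of_real r1" by auto
  from pd2[OF assms, of 1 n "Quat 0 1 0 0"] obtain r2 where
    r2: "qcnj 1 * \<psi> 0 * 1 + qcnj 1 * \<psi> n * Quat 0 1 0 0 + qcnj (Quat 0 1 0 0) * \<psi> (-n) * 1 + qcnj (Quat 0 1 0 0) * \<psi> 0 * Quat 0 1 0 0 = quat_of_real r2" by auto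
  from r1 r2 show ?thesis by (simp add: quat_eq_iff t)
qed

lemma quadr:
  assumes "pos_def_Z \<psi>" "\<psi> 0 = quat_of_real t"
  shows "0 \<le> t + 2*(qre (\<psi> n) * x0 - qi (\<psi> n) * x1 - qj (\<psi> n) * x2 - qk (\<psi> n) * x3) + t*(x0^2+x1^2+x2^2+x3^2)"
proof -
  from pd2[OF assms(1), of 1 n "Quat x0 x1 x2 x3"] obtain r where r: "r \<ge> 0"
    "qcnj 1 * \<psi> 0 * 1 + qcnj 1 * \<psi> n * Quat x0 x1 x2 x3 + qcnj (Quat x0 x1 x2 x3) * \<psi> (-n) * 1 + qcnj (Quat x0 x1 x2 x3) * \<psi> 0 * Quat x0 x1 x2 x3 = quat_of_real r" by auto
  from arg_cong[OF r(2), of qre] have "r = t + 2*(qre (\<psi> n) * x0 - qi (\<psi> n) * x1 - qj (\<psi> n) * x2 - qk (\<psi> n) * x3) + t*(x0^2+x1^2+x2^2+x3^2)"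
    by (simp add: herm[OF assms(1)] assms(2) power2_eq_square algebra_simps)
  with r show ?thesis by simp
qed

lemma normbound:
  assumes "\<psi> \<in> PH_Z"
  shows "(qre (\<psi> n))^2 + (qi (\<psi> n))^2 + (qj (\<psi> n))^2 + (qk (\<psi> n))^2 \<le> 1"
proof -
  have h0: "\<psi> 0 = quat_of_real 1" using assms by (simp add: PH_Z_def quat_eq_iff)
  have pd: "pos_def_Z \<psi>" using assms by (simp add: PH_Z_def)
  from quadr[OF pd h0, of n "- qre (\<psi> n)" "qi (\<psi> n)" "qj (\<psi> n)" "qk (\<psi> n)"] assms
  show ?thesis by (simp add: PH_Z_def power2_eq_square)
qed

lemma sq4_zero: "(a::real)^2+b^2+c^2+d^2 \<le> 0 \<Longrightarrow> a=0 \<and> b=0 \<and> c=0 \<and> d=0"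
proof -
  assume h: "a^2+b^2+c^2+d^2 \<le> 0"
  have "a^2 \<ge> 0" "b^2 \<ge> 0" "c^2 \<ge> 0" "d^2 \<ge> 0" by auto
  then have "a^2 = 0" "b^2 = 0" "c^2 = 0" "d^2 = 0" using h by linarith+
  then show ?thesis by simp
qed

lemma pd_zero:
  assumes "pos_def_Z \<psi>" "\<psi> 0 = 0"
  shows "\<psi> n = 0"
proof -
  have "\<psi> 0 = quat_of_real 0" using assms by (simp add: quat_eq_iff)
  from quadr[OF assms(1) this, of n "- qre (\<psi> n)" "qi (\<psi> n)" "qj (\<psi> n)" "qk (\<psi> n)"]
  have "(qre (\<psi> n))^2 + (qi (\<psi> n))^2 + (qj (\<psi> n))^2 + (qk (\<psi> n))^2 \<le> 0"
    by (simp add: power2_eq_square)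
  then show ?thesis
    by (simp add: quat_eq_iff sq4_zero)
qed

lemma pd_scale:
  assumes "pos_def_Z \<psi>" "c \<ge> 0"
  shows "pos_def_Z (\<lambda>n. c *\<^sub>R \<psi> n)"
  unfolding pos_def_Z_def
proof (intro allI)
  fix k :: nat and g :: "nat \<Rightarrow> int" and q :: "nat \<Rightarrow> quat"
  have "\<exists>r\<ge>0. (\<Sum>i\<in>{1..k}. \<Sum>j\<in>{1..k}. qcnj (q i) * \<psi> (g j - g i) * q j) = quat_of_real r"
    using assms(1) unfolding pos_def_Z_def by (elim allE[of _ k] allE[of _ g] allE[of _ q])
  then obtain r where r: "r \<ge> 0" "(\<Sum>i\<in>{1..k}. \<Sum>j\<in>{1..k}. qcnj (q i) * \<psi> (g j - g i) * q j) = quat_of_real r"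
    by blast
  have "(\<Sum>i\<in>{1..k}. \<Sum>j\<in>{1..k}. qcnj (q i) * (c *\<^sub>R \<psi> (g j - g i)) * q j)
     = c *\<^sub>R (\<Sum>i\<in>{1..k}. \<Sum>j\<in>{1..k}. qcnj (q i) * \<psi> (g j - g i) * q j)"
    by (simp add: quat_eq_iff sum_comps sum_distrib_left algebra_simps)
  also have "\<dots> = quat_of_real (c * r)" using r by (simp add: quat_eq_iff)
  finally show "\<exists>r\<ge>0. (\<Sum>i\<in>{1..k}. \<Sum>j\<in>{1..k}. qcnj (q i) * (c *\<^sub>R \<psi> (g j - g i)) * q j) = quat_of_real r"
    using r assms by (intro exI[of _ "c*r"]) simp
qed


lemma qcnj_one: "qcnj 1 = 1" and qcnj_uminus: "qcnj (- x) = - qcnj x"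
  by (simp_all add: quat_eq_iff)

lemma conv_term:
  fixes e :: quat and \<phi> :: "int \<Rightarrow> quat"
  assumes "e = 1 \<or> e = -1"
  shows "qcnj x * \<phi> (a - b) * y + qcnj x * \<phi> (a + 1 - b) * (e*y) + (qcnj (e*x) * \<phi> (a - (b+1)) * y + qcnj (e*x) * \<phi> (a - b) * (e*y))
     = qcnj x * (\<phi> (a-b) + \<phi> (a-b) + e*(\<phi>(a-b+1) + \<phi>(a-b-1))) * y"
proof -
  have 1: "a + 1 - b = a - b + 1" "a - (b+1) = a - b - 1" "a + 1 - (b + 1) = a - b" by auto
  show ?thesis unfolding 1 using assms
    by (auto simp: qcnj_one qcnj_uminus qcnj_mult algebra_simps)
qed

lemma pd_conv:
  fixes e :: quat
  assumes "pos_def_Z \<phi>" "e = 1 \<or> e = -1"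
  shows "pos_def_Z (\<lambda>n. \<phi> n + \<phi> n + e * (\<phi> (n+1) + \<phi> (n-1)))"
  unfolding pos_def_Z_def
proof (intro allI)
  fix k :: nat and g :: "nat \<Rightarrow> int" and q :: "nat \<Rightarrow> quat"
  define G where "G = (\<lambda>(i::nat,b::bool). g i + (if b then 1 else 0))"
  define Q where "Q = (\<lambda>(i::nat,b::bool). if b then e * q i else q i)"
  define F where "F = (\<lambda>x y. qcnj (Q x) * \<phi> (G y - G x) * Q y)"
  define I where "I = {1..k} \<times> (UNIV :: bool set)"
  obtain r where r: "r \<ge> 0" "(\<Sum>x\<in>I. \<Sum>y\<in>I. qcnj (Q x) * \<phi> (G y - G x) * Q y) = quat_of_real r"
    using pd_gen[OF assms(1), of I Q G] by (auto simp: I_def)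
  have "(\<Sum>x\<in>I. \<Sum>y\<in>I. F x y) = (\<Sum>i\<in>{1..k}. \<Sum>j\<in>{1..k}.
      (F (i,False) (j,False) + F (i,False) (j,True) + (F (i,True) (j,False) + F (i,True) (j,True))))"
    by (simp add: I_def sum.cartesian_product' UNIV_bool sum.distrib add_ac)
  also have "\<dots> = (\<Sum>i\<in>{1..k}. \<Sum>j\<in>{1..k}. qcnj (q i) * (\<phi> (g j - g i) + \<phi> (g j - g i) + e * (\<phi> (g j - g i + 1) + \<phi> (g j - g i - 1))) * q j)"
    by (intro sum.cong refl) (simp add: F_def G_def Q_def conv_term[OF assms(2)])
  finally show "\<exists>r\<ge>0. (\<Sum>i\<in>{1..k}. \<Sum>j\<in>{1..k}. qcnj (q i) * (\<phi> (g j - g i) + \<phi> (g j - g i) + e * (\<phi> (g j - g i + 1) + \<phi> (g j - g i - 1))) * q j) = quat_of_real r"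
    using r by (auto simp: F_def)
qed


lemma qnorm1: "qnorm x = 1 \<longleftrightarrow> (qre x)^2 + (qi x)^2 + (qj x)^2 + (qk x)^2 = 1"
  unfolding qnorm_def by (metis real_sqrt_eq_1_iff)

lemma unit_inv: "qnorm x = 1 \<Longrightarrow> qcnj x * x = 1 \<and> x * qcnj x = 1"
  unfolding qnorm1 by (simp add: quat_eq_iff power2_eq_square algebra_simps)

lemma cnj_self: "qcnj x * x = quat_of_real ((qre x)^2 + (qi x)^2 + (qj x)^2 + (qk x)^2)"
  by (simp add: quat_eq_iff power2_eq_square algebra_simps)

lemma hom_basic:
  assumes "hom_Z_S \<phi>"
  shows "\<phi> 0 = 1" "\<phi> (-n) = qcnj (\<phi> n)"
proof -
  have u: "\<And>n. qcnj (\<phi> n) * \<phi> n = 1 \<and> \<phi> n * qcnj (\<phi> n) = 1"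
    using assms unit_inv by (auto simp: hom_Z_S_def unit_quats_def)
  have m: "\<And>m n. \<phi> (m+n) = \<phi> m * \<phi> n" using assms by (auto simp: hom_Z_S_def)
  have "\<phi> 0 = (qcnj (\<phi> 0) * \<phi> 0) * \<phi> 0" using u by simp
  also have "\<dots> = qcnj (\<phi> 0) * (\<phi> 0 * \<phi> 0)" by (simp add: mult.assoc)
  also have "\<dots> = 1" using m[of 0 0] u by simp
  finally show z: "\<phi> 0 = 1" .
  have "qcnj (\<phi> n) = qcnj (\<phi> n) * (\<phi> n * \<phi> (-n))" using m[of n "-n"] z by simp
  also have "\<dots> = \<phi> (-n)" using u by (simp add: mult.assoc[symmetric])
  finally show "\<phi> (-n) = qcnj (\<phi> n)" by simp
qed

lemma hom_PH:
  assumes "hom_Z_S \<phi>"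
  shows "\<phi> \<in> PH_Z"
proof -
  have m: "\<And>m n. \<phi> (m+n) = \<phi> m * \<phi> n" using assms by (auto simp: hom_Z_S_def)
  have d: "\<phi> (y - x) = qcnj (\<phi> x) * \<phi> y" for x y
    using m[of "-x" y] hom_basic(2)[OF assms, of x] by simp
  have "pos_def_Z \<phi>" unfolding pos_def_Z_def
  proof (intro allI)
    fix k :: nat and g :: "nat \<Rightarrow> int" and q :: "nat \<Rightarrow> quat"
    define V where "V = (\<Sum>j\<in>{1..k}. \<phi> (g j) * q j)"
    have "(\<Sum>i\<in>{1..k}. \<Sum>j\<in>{1..k}. qcnj (q i) * \<phi> (g j - g i) * q j) = qcnj V * V"
      unfolding V_def qcnj_sum qcnj_mult sum_product d by (simp add: mult.assoc)
    then show "\<exists>r\<ge>0. (\<Sum>i\<in>{1..k}. \<Sum>j\<in>{1..k}. qcnj (q i) * \<phi> (g j - g i) * q j) = quat_of_real r"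
      by (intro exI[of _ "(qre V)^2 + (qi V)^2 + (qj V)^2 + (qk V)^2"]) (simp add: cnj_self)
  qed
  then show ?thesis using hom_basic(1)[OF assms] by (simp add: PH_Z_def)
qed

lemma dir1_point:
  fixes a0 a1 a2 a3 b0 b1 b2 b3 u s0 s1 s2 s3 :: real
  assumes "a0^2+a1^2+a2^2+a3^2 \<le> 1" "b0^2+b1^2+b2^2+b3^2 \<le> 1"
    and s: "s0 = (1-u)*a0 + u*b0" "s1 = (1-u)*a1 + u*b1" "s2 = (1-u)*a2 + u*b2" "s3 = (1-u)*a3 + u*b3"
    and n: "s0^2+s1^2+s2^2+s3^2 = 1"
    and hA: "a0 * s0+a1 * s1+a2 * s2+a3 * s3 \<le> 1" and hB: "b0 * s0+b1 * s1+b2 * s2+b3 * s3 \<le> 1"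
    and u: "0 < u" "u < 1"
  shows "a0 = s0 \<and> a1 = s1 \<and> a2 = s2 \<and> a3 = s3 \<and> b0 = s0 \<and> b1 = s1 \<and> b2 = s2 \<and> b3 = s3"
proof -
  define AA :: real where "AA = a0 * s0+a1 * s1+a2 * s2+a3 * s3"
  define BB :: real where "BB = b0 * s0+b1 * s1+b2 * s2+b3 * s3"
  have "(1-u)*AA + u*BB = s0^2+s1^2+s2^2+s3^2"
    unfolding AA_def BB_def s by (simp add: power2_eq_square algebra_simps)
  then have e: "(1-u)*(1-AA) + u*(1-BB) = 0" using n by (simp add: algebra_simps)
  have "(1-u)*(1-AA) \<ge> 0" "u*(1-BB) \<ge> 0" using hA hB u by (auto simp: AA_def BB_def)
  then have "(1-u)*(1-AA) = 0" "u*(1-BB) = 0" using e by linarith+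
  then have A1: "AA = 1" and B1: "BB = 1" using u by auto
  have "(a0-s0)^2+(a1-s1)^2+(a2-s2)^2+(a3-s3)^2 = (a0^2+a1^2+a2^2+a3^2) - 2*AA + (s0^2+s1^2+s2^2+s3^2)"
    unfolding AA_def by (simp add: power2_eq_square algebra_simps)
  then have "(a0-s0)^2+(a1-s1)^2+(a2-s2)^2+(a3-s3)^2 \<le> 0" using assms(1) n A1 by linarith
  from sq4_zero[OF this] have 1: "a0 = s0 \<and> a1 = s1 \<and> a2 = s2 \<and> a3 = s3" by simp
  have "(b0-s0)^2+(b1-s1)^2+(b2-s2)^2+(b3-s3)^2 = (b0^2+b1^2+b2^2+b3^2) - 2*BB + (s0^2+s1^2+s2^2+s3^2)"
    unfolding BB_def by (simp add: power2_eq_square algebra_simps)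
  then have "(b0-s0)^2+(b1-s1)^2+(b2-s2)^2+(b3-s3)^2 \<le> 0" using assms(2) n B1 by linarith
  from sq4_zero[OF this] 1 show ?thesis by simp
qed

lemma dir1:
  assumes "hom_Z_S \<phi>"
  shows "extreme_point_fun \<phi> PH_Z"
  unfolding extreme_point_fun_def
proof (intro conjI ballI impI notI)
  show "\<phi> \<in> PH_Z" by (rule hom_PH[OF assms])
  fix a b assume a: "a \<in> PH_Z" and b: "b \<in> PH_Z" and ab: "a \<noteq> b"
  assume "\<exists>u. 0 < u \<and> u < 1 \<and> \<phi> = (\<lambda>n. (1 - u) *\<^sub>R a n + u *\<^sub>R b n)"
  then obtain u where u: "0 < u" "u < 1" and phi: "\<And>n. \<phi> n = (1 - u) *\<^sub>R a n + u *\<^sub>R b n" by auto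
  have "a n = b n" for n
  proof -
    have pa: "pos_def_Z a" "a 0 = quat_of_real 1" and pb: "pos_def_Z b" "b 0 = quat_of_real 1"
      using a b by (auto simp: PH_Z_def quat_eq_iff)
    define s where "s = \<phi> n"
    have n: "(qre s)^2 + (qi s)^2 + (qj s)^2 + (qk s)^2 = 1"
      using assms by (simp add: hom_Z_S_def unit_quats_def qnorm1 s_def)
    from quadr[OF pa, of n "- qre s" "qi s" "qj s" "qk s"] n
    have A: "qre (a n) * qre s + qi (a n) * qi s + qj (a n) * qj s + qk (a n) * qk s \<le> 1"
      by (simp add: power2_eq_square)
    from quadr[OF pb, of n "- qre s" "qi s" "qj s" "qk s"] n
    have B: "qre (b n) * qre s + qi (b n) * qi s + qj (b n) * qj s + qk (b n) * qk s \<le> 1"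
      by (simp add: power2_eq_square)
    have e: "qre s = (1-u)*qre(a n) + u*qre(b n)" "qi s = (1-u)*qi(a n) + u*qi(b n)"
      "qj s = (1-u)*qj(a n) + u*qj(b n)" "qk s = (1-u)*qk(a n) + u*qk(b n)" by (simp_all add: s_def phi)
    from dir1_point[OF normbound[OF a, of n] normbound[OF b, of n] e n A B u]
    show "a n = b n" by (simp add: quat_eq_iff)
  qed
  then show False using ab by auto
qed


definition E :: "real \<Rightarrow> real \<Rightarrow> real \<Rightarrow> complex \<Rightarrow> quat" where
  "E u1 u2 u3 z = Quat (Re z) (Im z * u1) (Im z * u2) (Im z * u3)"

lemma E_comps [simp]: "qre (E u1 u2 u3 z) = Re z" "qi (E u1 u2 u3 z) = Im z * u1"
  "qj (E u1 u2 u3 z) = Im z * u2" "qk (E u1 u2 u3 z) = Im z * u3"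
  by (simp_all add: E_def)

lemma E_add: "E u1 u2 u3 (a + b) = E u1 u2 u3 a + E u1 u2 u3 b"
  by (simp add: quat_eq_iff algebra_simps)

lemma E_scale: "E u1 u2 u3 (complex_of_real r * a) = r *\<^sub>R E u1 u2 u3 a"
  by (simp add: quat_eq_iff)

lemma E_one: "E u1 u2 u3 1 = 1"
  by (simp add: quat_eq_iff)

lemma E_mult:
  assumes "u1^2 + u2^2 + u3^2 = 1"
  shows "E u1 u2 u3 (a * b) = E u1 u2 u3 a * E u1 u2 u3 b"
proof -
  have "qre (E u1 u2 u3 a * E u1 u2 u3 b) = Re a * Re b - Im a * Im b * (u1^2 + u2^2 + u3^2)"
    by (simp add: power2_eq_square algebra_simps)
  then have "qre (E u1 u2 u3 a * E u1 u2 u3 b) = qre (E u1 u2 u3 (a * b))" using assms by simp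
  then show ?thesis by (simp add: quat_eq_iff algebra_simps)
qed

lemma E_norm:
  assumes "u1^2 + u2^2 + u3^2 = 1"
  shows "qnorm (E u1 u2 u3 a) = cmod a"
proof -
  have "(Re a)^2 + (Im a * u1)^2 + (Im a * u2)^2 + (Im a * u3)^2 = (Re a)^2 + (Im a)^2 * (u1^2 + u2^2 + u3^2)"
    by (simp add: power2_eq_square algebra_simps)
  then show ?thesis using assms by (simp add: qnorm_def norm_complex_def)
qed

lemma hom_E:
  assumes "u1^2 + u2^2 + u3^2 = 1" "cmod y = 1"
  shows "hom_Z_S (\<lambda>n. E u1 u2 u3 (y powi n))"
proof -
  have y0: "y \<noteq> 0" using assms(2) by auto
  show ?thesis unfolding hom_Z_S_def unit_quats_def
    using assms by (auto simp: E_norm norm_power_int power_int_add[OF disjI1[OF y0]] E_mult)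
qed

lemma powi_rec:
  fixes y :: complex
  assumes "(Re y)^2 + (Im y)^2 = 1"
  shows "y powi (n+1) + y powi (n-1) = complex_of_real (2 * Re y) * y powi n"
proof -
  have y0: "y \<noteq> 0" using assms by auto
  have inv: "inverse y = cnj y" using assms by (simp add: complex_eq_iff)
  have "y powi (n+1) = y powi n * y" using power_int_add[OF disjI1[OF y0], of n 1] by simp
  moreover have "y powi (n-1) = y powi n * cnj y"
    using power_int_add[OF disjI1[OF y0], of n "-1"] inv by simp
  ultimately have "y powi (n+1) + y powi (n-1) = y powi n * (y + cnj y)" by (simp add: algebra_simps)
  also have "y + cnj y = complex_of_real (2 * Re y)" by (simp add: complex_eq_iff)
  finally show ?thesis by (simp add: mult.commute)
qed


lemma ext_rec:
  assumes ext: "extreme_point_fun \<phi> PH_Z"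
  shows "\<phi> (n+1) + \<phi> (n-1) = (2 * qre (\<phi> 1)) *\<^sub>R \<phi> n"
proof -
  have PH: "\<phi> \<in> PH_Z" using ext by (simp add: extreme_point_fun_def)
  then have pd: "pos_def_Z \<phi>" and h0: "\<phi> 0 = 1" by (auto simp: PH_Z_def)
  define c where "c = qre (\<phi> 1)"
  have hm1: "\<phi> (-1) = qcnj (\<phi> 1)" using herm[OF pd, of 1] .
  have "c^2 \<le> 1" using normbound[OF PH, of 1] unfolding c_def
    by (smt (verit) zero_le_power2)
  then have cb: "-1 \<le> c" "c \<le> 1" by (auto simp: abs_square_le_1 abs_le_iff)
  define Pp where "Pp = (\<lambda>n. \<phi> n + \<phi> n + 1 * (\<phi>(n+1) + \<phi>(n-1)))"
  define Pm where "Pm = (\<lambda>n. \<phi> n + \<phi> n + (-1) * (\<phi>(n+1) + \<phi>(n-1)))"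
  have pdp: "pos_def_Z Pp" unfolding Pp_def by (rule pd_conv[OF pd]) simp
  have pdm: "pos_def_Z Pm" unfolding Pm_def by (rule pd_conv[OF pd]) simp
  have Pp0: "Pp 0 = quat_of_real (2 + 2*c)" by (simp add: Pp_def quat_eq_iff h0 hm1 c_def)
  have Pm0: "Pm 0 = quat_of_real (2 - 2*c)" by (simp add: Pm_def quat_eq_iff h0 hm1 c_def)
  have key: "Pm n = (2-2*c) *\<^sub>R \<phi> n \<or> Pp n = (2+2*c) *\<^sub>R \<phi> n"
  proof (cases "c = 1 \<or> c = -1")
    case True
    then show ?thesis
    proof
      assume c1: "c = 1"
      have "Pm 0 = 0" using Pm0 c1 by (simp add: quat_eq_iff)
      from pd_zero[OF pdm this] c1 show ?thesis by simp
    next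
      assume c1: "c = -1"
      have "Pp 0 = 0" using Pp0 c1 by (simp add: quat_eq_iff)
      from pd_zero[OF pdp this] c1 show ?thesis by simp
    qed
  next
    case False
    then have c1: "-1 < c" "c < 1" using cb by auto
    then have nz: "2 - 2*c \<noteq> 0" "2 + 2*c \<noteq> 0" "2 - 2*c > 0" "2 + 2*c > 0" by auto
    define a where "a = (\<lambda>n. (1/(2-2*c)) *\<^sub>R Pm n)"
    define b where "b = (\<lambda>n. (1/(2+2*c)) *\<^sub>R Pp n)"
    have aPH: "a \<in> PH_Z" unfolding PH_Z_def a_def
      using pd_scale[OF pdm, of "1/(2-2*c)"] nz Pm0 by (simp add: quat_eq_iff)
    have bPH: "b \<in> PH_Z" unfolding PH_Z_def b_def
      using pd_scale[OF pdp, of "1/(2+2*c)"] nz Pp0 by (simp add: quat_eq_iff)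
    define u where "u = (1+c)/2"
    have u: "0 < u" "u < 1" using c1 by (auto simp: u_def)
    have dec: "\<phi> = (\<lambda>n. (1 - u) *\<^sub>R a n + u *\<^sub>R b n)"
    proof
      fix n
      show "\<phi> n = (1 - u) *\<^sub>R a n + u *\<^sub>R b n"
      proof -
        have k1: "(1-u) * (1/(2-2*c)) = 1/4" using nz by (simp add: u_def field_simps)
        have k2: "u * (1/(2+2*c)) = 1/4" using nz by (simp add: u_def field_simps)
        have "(1-u) *\<^sub>R a n + u *\<^sub>R b n = (1/4) *\<^sub>R Pm n + (1/4) *\<^sub>R Pp n"
          by (simp only: a_def b_def scaleR_scaleR k1 k2)
        also have "\<dots> = (1/4) *\<^sub>R (4 *\<^sub>R \<phi> n)"
          by (simp add: Pm_def Pp_def quat_eq_iff field_simps)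
        finally show ?thesis by (simp add: quat_eq_iff field_simps)
      qed
    qed
    have "a = b"
    proof (rule ccontr)
      assume "a \<noteq> b"
      then show False using ext aPH bPH u dec unfolding extreme_point_fun_def by blast
    qed
    then have "\<phi> n = a n" by (simp add: dec algebra_simps)
    then have "Pm n = (2-2*c) *\<^sub>R \<phi> n" using nz by (simp add: a_def)
    then show ?thesis by simp
  qed
  then show ?thesis
    by (auto simp: Pm_def Pp_def quat_eq_iff c_def algebra_simps)
qed


lemma rec_rep:
  assumes h0: "\<phi> 0 = 1" and R: "\<And>n. \<phi> (n+1) + \<phi> (n-1) = (2 * qre (\<phi> 1)) *\<^sub>R \<phi> n"
    and nb: "(qre (\<phi> 1))^2 + (qi (\<phi> 1))^2 + (qj (\<phi> 1))^2 + (qk (\<phi> 1))^2 \<le> 1"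
  shows "\<exists>u1 u2 u3 z \<alpha>. u1^2+u2^2+u3^2 = 1 \<and> (Re z)^2 + (Im z)^2 = 1 \<and> 0 \<le> \<alpha> \<and> \<alpha> \<le> 1 \<and>
     (Im z = 0 \<longrightarrow> \<alpha> = 1) \<and>
     (\<forall>n. \<phi> n = E u1 u2 u3 (complex_of_real \<alpha> * z powi n + complex_of_real (1-\<alpha>) * cnj z powi n))"
proof -
  define c where "c = qre (\<phi> 1)"
  define v1 where "v1 = qi (\<phi> 1)"
  define v2 where "v2 = qj (\<phi> 1)"
  define v3 where "v3 = qk (\<phi> 1)"
  define w where "w = sqrt (v1^2 + v2^2 + v3^2)"
  define u1 where "u1 = (if w = 0 then 1 else v1 / w)"
  define u2 where "u2 = (if w = 0 then 0 else v2 / w)"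
  define u3 where "u3 = (if w = 0 then 0 else v3 / w)"
  have w0: "w \<ge> 0" by (simp add: w_def)
  have w2: "w^2 = v1^2 + v2^2 + v3^2" by (simp add: w_def)
  have hv: "v1 = w * u1 \<and> v2 = w * u2 \<and> v3 = w * u3"
  proof (cases "w = 0")
    case True
    then have "v1^2 + v2^2 + v3^2 + 0^2 \<le> 0" using w2 by simp
    from sq4_zero[OF this] True show ?thesis by (simp add: u1_def u2_def u3_def)
  next
    case False
    then show ?thesis by (simp add: u1_def u2_def u3_def)
  qed
  have unit: "u1^2 + u2^2 + u3^2 = 1"
  proof (cases "w = 0")
    case True
    then show ?thesis by (simp add: u1_def u2_def u3_def)
  next
    case False
    then have "u1^2 + u2^2 + u3^2 = (v1^2 + v2^2 + v3^2) / w^2"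
      by (simp add: u1_def u2_def u3_def power_divide add_divide_distrib)
    moreover have "w^2 \<noteq> 0" using False by simp
    then have "v1^2 + v2^2 + v3^2 \<noteq> 0" using w2 by simp
    ultimately show ?thesis using w2 by simp
  qed
  have cw: "c^2 + w^2 \<le> 1" using nb w2 by (simp add: c_def v1_def v2_def v3_def)
  define s where "s = sqrt (1 - c^2)"
  have c1: "c^2 \<le> 1" using cw zero_le_power2[of w] by linarith
  have s0: "s \<ge> 0" and s2: "s^2 = 1 - c^2" using c1 by (auto simp: s_def)
  have ws: "w \<le> s" unfolding s_def using cw w0
    by (metis add.commute le_diff_eq real_sqrt_le_iff real_sqrt_abs abs_of_nonneg)
  define z where "z = Complex c s"
  define \<alpha> where "\<alpha> = (if s = 0 then 1 else (1 + w/s)/2)"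
  have \<alpha>b: "0 \<le> \<alpha>" "\<alpha> \<le> 1" using ws w0 s0 by (auto simp: \<alpha>_def field_simps)
  have aw: "(2*\<alpha> - 1) * s = w" using ws w0 s0 by (auto simp: \<alpha>_def field_simps)
  have zn: "(Re z)^2 + (Im z)^2 = 1" using s2 by (simp add: z_def)
  have zcn: "(Re (cnj z))^2 + (Im (cnj z))^2 = 1" using zn by simp
  define \<psi> where "\<psi> = (\<lambda>n. complex_of_real \<alpha> * z powi n + complex_of_real (1-\<alpha>) * cnj z powi n)"
  have \<psi>rec: "\<psi> (n+1) + \<psi> (n-1) = complex_of_real (2*c) * \<psi> n" for n
  proof -
    have rz: "Re z = c" "Re (cnj z) = c" by (simp_all add: z_def)
    have "\<psi> (n+1) + \<psi> (n-1) = complex_of_real \<alpha> * (z powi (n+1) + z powi (n-1)) + complex_of_real (1-\<alpha>) * (cnj z powi (n+1) + cnj z powi (n-1))"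
      by (simp only: \<psi>_def distrib_left add_ac)
    also have "\<dots> = complex_of_real \<alpha> * (complex_of_real (2*c) * z powi n) + complex_of_real (1-\<alpha>) * (complex_of_real (2*c) * cnj z powi n)"
      using powi_rec[OF zn, of n] powi_rec[OF zcn, of n] rz by simp
    also have "\<dots> = complex_of_real (2*c) * \<psi> n" by (simp add: \<psi>_def algebra_simps)
    finally show ?thesis .
  qed
  define F where "F = (\<lambda>n. E u1 u2 u3 (\<psi> n))"
  have Frec: "F (n+1) + F (n-1) = (2*c) *\<^sub>R F n" for n
    unfolding F_def E_add[symmetric] \<psi>rec E_scale ..
  have F0: "F 0 = 1" by (simp add: F_def \<psi>_def E_one)
  have F1: "F 1 = \<phi> 1"
  proof -
    have "Re (\<psi> 1) = c" "Im (\<psi> 1) = w" using aw by (simp_all add: \<psi>_def z_def algebra_simps)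
    then show ?thesis using hv by (simp add: F_def quat_eq_iff c_def v1_def v2_def v3_def)
  qed
  have "\<phi> n = F n \<and> \<phi> (n+1) = F (n+1)" for n
  proof (induction n rule: int_induct[where k=0])
    case base
    then show ?case using h0 F0 F1 by simp
  next
    case (step1 i)
    have "\<phi> (i+1+1) = (2*c) *\<^sub>R \<phi> (i+1) - \<phi> i" using R[of "i+1"] unfolding c_def
      by (simp add: eq_diff_eq)
    moreover have "F (i+1+1) = (2*c) *\<^sub>R F (i+1) - F i" using Frec[of "i+1"]
      by (simp add: eq_diff_eq)
    ultimately show ?case using step1 by simp
  next
    case (step2 i)
    have "\<phi> (i-1) = (2*c) *\<^sub>R \<phi> i - \<phi> (i+1)" using R[of i] unfolding c_def
      by (simp add: eq_diff_eq add.commute)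
    moreover have "F (i-1) = (2*c) *\<^sub>R F i - F (i+1)" using Frec[of i]
      by (simp add: eq_diff_eq add.commute)
    ultimately show ?case using step2 by simp
  qed
  then have "\<forall>n. \<phi> n = E u1 u2 u3 (\<psi> n)" by (simp add: F_def)
  moreover have "Im z = 0 \<longrightarrow> \<alpha> = 1" by (simp add: z_def \<alpha>_def)
  ultimately show ?thesis using unit zn \<alpha>b unfolding \<psi>_def by blast
qed


lemma dir2:
  assumes ext: "extreme_point_fun \<phi> PH_Z"
  shows "hom_Z_S \<phi>"
proof -
  have PH: "\<phi> \<in> PH_Z" using ext by (simp add: extreme_point_fun_def)
  then have h0: "\<phi> 0 = 1" by (auto simp: PH_Z_def)
  obtain u1 u2 u3 z \<alpha> where unit: "u1^2+u2^2+u3^2 = 1" and zn: "(Re z)^2 + (Im z)^2 = 1"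
    and \<alpha>: "0 \<le> \<alpha>" "\<alpha> \<le> 1" and im: "Im z = 0 \<longrightarrow> \<alpha> = 1"
    and rep: "\<And>n. \<phi> n = E u1 u2 u3 (complex_of_real \<alpha> * z powi n + complex_of_real (1-\<alpha>) * cnj z powi n)"
    using rec_rep[OF h0 ext_rec[OF ext] normbound[OF PH]] by blast
  have cz: "cmod z = 1" and ccz: "cmod (cnj z) = 1" using zn by (simp_all add: norm_complex_def)
  show ?thesis
  proof (cases "\<alpha> = 1")
    case True
    then have "\<phi> = (\<lambda>n. E u1 u2 u3 (z powi n))" using rep by auto
    then show ?thesis using hom_E[OF unit cz] by simp
  next
    case a1: False
    show ?thesis
    proof (cases "\<alpha> = 0")
      case True
      then have "\<phi> = (\<lambda>n. E u1 u2 u3 (cnj z powi n))" using rep by auto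
      then show ?thesis using hom_E[OF unit ccz] by simp
    next
      case False
      with a1 \<alpha> have u: "0 < \<alpha>" "\<alpha> < 1" by auto
      have imz: "Im z \<noteq> 0" using im a1 by auto
      define a where "a = (\<lambda>n. E u1 u2 u3 (cnj z powi n))"
      define b where "b = (\<lambda>n. E u1 u2 u3 (z powi n))"
      have aPH: "a \<in> PH_Z" unfolding a_def by (rule hom_PH[OF hom_E[OF unit ccz]])
      have bPH: "b \<in> PH_Z" unfolding b_def by (rule hom_PH[OF hom_E[OF unit cz]])
      have dec: "\<phi> = (\<lambda>n. (1 - \<alpha>) *\<^sub>R a n + \<alpha> *\<^sub>R b n)"
        by (rule HOL.ext) (simp add: rep a_def b_def quat_eq_iff algebra_simps)
      have "a \<noteq> b"
      proof
        assume "a = b"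
        then have "a 1 = b 1" by simp
        then have "Im z * u1 = 0" "Im z * u2 = 0" "Im z * u3 = 0"
          by (simp_all add: a_def b_def quat_eq_iff)
        then have "u1 = 0" "u2 = 0" "u3 = 0" using imz by auto
        then show False using unit by simp
      qed
      then show ?thesis using ext aPH bPH u dec unfolding extreme_point_fun_def by blast
    qed
  qed
qed

theorem mainTheorem8:
  fixes \<phi> :: "int \<Rightarrow> quat"
  shows "extreme_point_fun \<phi> PH_Z \<longleftrightarrow> hom_Z_S \<phi>"
  using dir1 dir2 by blast

end
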